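(* For every prime power $q$, all integers $n$, $r\le\lfloor n/2\rfloor$ and $0<\rho<r$, $$K_{\mathrm{C}}(q,n,r,\rho)\le K_{\mathrm{C}}(q,n-1,r,\rho-1)\le {n-\rho\brack r} \quad\text{and}\quad K_{\mathrm{C}}(q,n,r,\rho)\le K_{\mathrm{C}}(q,n,r-1,\rho-1)\le {n\brack r-\rho}.$$
   Context: ${m\brack k}=\prod_{i=0}^{k-1}\frac{q^m-q^i}{q^k-q^i}$ is the Gaussian binomial (the number of $k$-dimensional subspaces of $\mathrm{GF}(q)^m$). $E_r(q,n)$ is the set of $r$-dimensional subspaces of $\mathrm{GF}(q)^n$ with injection distance $d_{\mathrm{I}}(U,V)=\dim(U+V)-\min\{\dim U,\dim V\}$; the covering radius of a nonempty $\mathcal{C}\subseteq E_r(q,n)$ is $\max_U\min_{C\in\mathcal{C}}d_{\mathrm{I}}(U,C)$, and $K_{\mathrm{C}}(q,n,r,\rho)$ is the minimum cardinality of a subset of $E_r(q,n)$ with covering radius at most $\rho$ (for any $0\le r\le n$, $\rho\ge 0$). *)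

theory Defs
  imports Complex_Main "HOL-Library.Function_Algebras" "HOL-Library.Set_Algebras"
begin

text \<open>Vectors of GF(q)^n are represented as functions nat => 'a (finite field 'a, q = CARD('a))
  vanishing outside {0..<n}; the ambient vector space is the space of all nat => 'a with
  pointwise operations.\<close>

definition fscale :: "'a::field \<Rightarrow> (nat \<Rightarrow> 'a) \<Rightarrow> (nat \<Rightarrow> 'a)" where
  "fscale c v = (\<lambda>i. c * v i)"

interpretation fv: vector_space "fscale :: 'a::field \<Rightarrow> (nat \<Rightarrow> 'a) \<Rightarrow> (nat \<Rightarrow> 'a)"
  by unfold_locales (auto simp: fscale_def fun_eq_iff algebra_simps)

definition ambient :: "nat \<Rightarrow> (nat \<Rightarrow> 'a::field) set" where
  "ambient n = {v. \<forall>i\<ge>n. v i = 0}"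

definition Er :: "nat \<Rightarrow> nat \<Rightarrow> (nat \<Rightarrow> 'a::{field,finite}) set set" where
  "Er n r = {U. fv.subspace U \<and> U \<subseteq> ambient n \<and> fv.dim U = r}"

definition dI :: "(nat \<Rightarrow> 'a::field) set \<Rightarrow> (nat \<Rightarrow> 'a) set \<Rightarrow> nat" where
  "dI U V = fv.dim (U + V) - min (fv.dim U) (fv.dim V)"

definition cov_radius :: "nat \<Rightarrow> nat \<Rightarrow> (nat \<Rightarrow> 'a::{field,finite}) set set \<Rightarrow> nat" where
  "cov_radius n r C = Max ((\<lambda>U. Min ((\<lambda>D. dI U D) ` C)) ` Er n r)"

text \<open>K_C(q,n,r,rho) with q = CARD('a); the type argument fixes the field.\<close>
definition KC :: "'a::{field,finite} itself \<Rightarrow> nat \<Rightarrow> nat \<Rightarrow> nat \<Rightarrow> nat" where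
  "KC _ n r \<rho> = (LEAST k. \<exists>C::(nat \<Rightarrow> 'a) set set. C \<subseteq> Er n r \<and> C \<noteq> {} \<and> card C = k
                                \<and> cov_radius n r C \<le> \<rho>)"

definition gauss_binom :: "nat \<Rightarrow> nat \<Rightarrow> nat \<Rightarrow> real" where
  "gauss_binom q m k = (\<Prod>i<k. (real q ^ m - real q ^ i) / (real q ^ k - real q ^ i))"

end

theory Submission
  imports Defs "HOL-Library.FuncSet"
begin

lemma fscale_simps: "fscale c v i = c * v i"
  by (simp add: fscale_def)

lemma q_ge2: "2 \<le> card (UNIV :: 'a::{field,finite} set)"
proof -
  have "{0::'a, 1} \<subseteq> UNIV" by simp
  hence "card {0::'a,1} \<le> card (UNIV::'a set)" by (rule card_mono[OF finite_UNIV])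
  thus ?thesis by simp
qed

lemma card_span_indep:
  fixes B :: "(nat \<Rightarrow> 'a::{field,finite}) set"
  assumes "finite B" "fv.independent B"
  shows "finite (fv.span B) \<and> card (fv.span B) = card (UNIV::'a set) ^ card B"
  using assms
proof (induction B rule: finite_induct)
  case empty
  then show ?case by (simp add: fv.span_empty)
next
  case (insert x B)
  have ind: "fv.independent B" and nx: "x \<notin> fv.span B"
    using insert.prems insert.hyps by (auto simp: fv.independent_insert)
  from insert.IH[OF ind] have IH: "finite (fv.span B)" "card (fv.span B) = card (UNIV::'a set) ^ card B" by auto
  let ?f = "\<lambda>(c, y). fscale c x + y"
  have eq: "fv.span (insert x B) = ?f ` (UNIV \<times> fv.span B)"
  proof
    show "fv.span (insert x B) \<subseteq> ?f ` (UNIV \<times> fv.span B)"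
    proof
      fix z assume "z \<in> fv.span (insert x B)"
      then obtain k where "z - fscale k x \<in> fv.span B" by (auto simp: fv.span_insert)
      moreover have "z = ?f (k, z - fscale k x)" by simp
      ultimately show "z \<in> ?f ` (UNIV \<times> fv.span B)" by blast
    qed
  next
    show "?f ` (UNIV \<times> fv.span B) \<subseteq> fv.span (insert x B)"
    proof clarify
      fix c y assume "y \<in> fv.span B"
      then show "fscale c x + y \<in> fv.span (insert x B)"
        by (metis fv.span_add fv.span_base fv.span_mono fv.span_scale insertI1 subset_insertI subsetD)
    qed
  qed
  have inj: "inj_on ?f (UNIV \<times> fv.span B)"
  proof (rule inj_onI, clarify)
    fix c y c' y' assume y: "y \<in> fv.span B" and y': "y' \<in> fv.span B"
      and e: "fscale c x + y = fscale c' x + y'"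
    show "c = c' \<and> y = y'"
    proof (cases "c = c'")
      case True then show ?thesis using e by simp
    next
      case False
      have "fscale (c - c') x = y' - y" using e
        by (simp add: fun_eq_iff algebra_simps fscale_simps)
      hence "fscale (c - c') x \<in> fv.span B" using y y' by (simp add: fv.span_diff)
      hence "fscale (inverse (c - c')) (fscale (c - c') x) \<in> fv.span B" by (rule fv.span_scale)
      hence "x \<in> fv.span B" using False by (simp add: fv.scale_scale)
      with nx show ?thesis by simp
    qed
  qed
  have "card (fv.span (insert x B)) = card (UNIV::'a set) * card (fv.span B)"
    using card_image[OF inj] eq IH by (simp add: card_cartesian_product)
  then show ?case using IH eq insert.hyps by simp
qed


abbreviation qq :: "'a::{field,finite} itself \<Rightarrow> nat" where "qq _ \<equiv> card (UNIV::'a set)"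

lemma subspace_basis:
  fixes X :: "(nat \<Rightarrow> 'a::{field,finite}) set"
  assumes "fv.subspace X" "finite X"
  obtains B where "B \<subseteq> X" "fv.independent B" "fv.span B = X" "card B = fv.dim X" "finite B"
proof -
  obtain B where B: "B \<subseteq> X" "fv.independent B" "X \<subseteq> fv.span B" "card B = fv.dim X"
    by (rule fv.basis_exists)
  have "fv.span B = X" using B assms by (meson fv.span_minimal subset_antisym)
  thus ?thesis using that B assms finite_subset by blast
qed

lemma card_subspace:
  fixes X :: "(nat \<Rightarrow> 'a::{field,finite}) set"
  assumes "fv.subspace X" "finite X"
  shows "card X = card (UNIV::'a set) ^ fv.dim X"
proof -
  obtain B where "B \<subseteq> X" "fv.independent B" "fv.span B = X" "card B = fv.dim X" "finite B"
    using subspace_basis[OF assms] by blast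
  thus ?thesis using card_span_indep[of B] by auto
qed

lemma pow_inj: "(card (UNIV::'a::{field,finite} set)) ^ a = card (UNIV::'a set) ^ b \<Longrightarrow> a = b"
  using q_ge2[where 'a='a] by (metis One_nat_def Suc_1 Suc_le_lessD power_inject_exp)

lemma pow_le: "(card (UNIV::'a::{field,finite} set)) ^ a \<le> card (UNIV::'a set) ^ b \<Longrightarrow> a \<le> b"
  using q_ge2[where 'a='a] by (metis One_nat_def Suc_1 Suc_le_lessD power_le_imp_le_exp)

lemma dim_mono_fin:
  fixes X Y :: "(nat \<Rightarrow> 'a::{field,finite}) set"
  assumes "fv.subspace X" "fv.subspace Y" "finite Y" "X \<subseteq> Y"
  shows "fv.dim X \<le> fv.dim Y"
proof -
  have "finite X" using assms finite_subset by blast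
  hence "card X \<le> card Y" using assms card_mono by blast
  thus ?thesis using card_subspace[of X] card_subspace[of Y] assms \<open>finite X\<close>
    by (metis pow_le)
qed

lemma finite_ambient: "finite (ambient n :: (nat \<Rightarrow> 'a::{field,finite}) set)"
  and card_ambient: "card (ambient n :: (nat \<Rightarrow> 'a::{field,finite}) set) = card (UNIV::'a set) ^ n"
proof -
  let ?g = "\<lambda>f::nat \<Rightarrow> 'a. (\<lambda>i. if i < n then f i else 0)"
  have eq: "(ambient n :: (nat \<Rightarrow> 'a) set) = ?g ` ({0..<n} \<rightarrow>\<^sub>E UNIV)"
  proof
    show "ambient n \<subseteq> ?g ` ({0..<n} \<rightarrow>\<^sub>E UNIV)"
    proof
      fix v :: "nat \<Rightarrow> 'a" assume v: "v \<in> ambient n"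
      have "v = ?g (restrict v {0..<n})"
      proof (rule ext)
        fix i show "v i = ?g (restrict v {0..<n}) i"
          using v by (cases "i < n") (simp_all add: ambient_def)
      qed
      moreover have "restrict v {0..<n} \<in> {0..<n} \<rightarrow>\<^sub>E UNIV" by simp
      ultimately show "v \<in> ?g ` ({0..<n} \<rightarrow>\<^sub>E UNIV)" by (rule image_eqI)
    qed
  next
    show "?g ` ({0..<n} \<rightarrow>\<^sub>E UNIV) \<subseteq> ambient n"
    proof
      fix w assume "w \<in> ?g ` ({0..<n} \<rightarrow>\<^sub>E UNIV)"
      then obtain f where "w = ?g f" by blast
      thus "w \<in> ambient n" by (simp add: ambient_def)
    qed
  qed
  have inj: "inj_on ?g ({0..<n} \<rightarrow>\<^sub>E UNIV)"
  proof (rule inj_onI)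
    fix f g assume f: "f \<in> {0..<n} \<rightarrow>\<^sub>E (UNIV::'a set)" and g: "g \<in> {0..<n} \<rightarrow>\<^sub>E (UNIV::'a set)"
      and e: "?g f = ?g g"
    show "f = g"
    proof (rule PiE_ext[OF f g])
      fix i assume "i \<in> {0..<n}"
      thus "f i = g i" using fun_cong[OF e, of i] by simp
    qed
  qed
  show "finite (ambient n :: (nat \<Rightarrow> 'a) set)" using eq by (simp add: finite_PiE)
  show "card (ambient n :: (nat \<Rightarrow> 'a) set) = card (UNIV::'a set) ^ n"
    using eq card_image[OF inj] by (simp add: card_PiE)
qed

lemma subspace_ambient: "fv.subspace (ambient n :: (nat \<Rightarrow> 'a::{field,finite}) set)"
  by (auto simp: fv.subspace_def ambient_def fscale_simps)

lemma dim_ambient: "fv.dim (ambient n :: (nat \<Rightarrow> 'a::{field,finite}) set) = n"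
proof -
  have "card (ambient n :: (nat \<Rightarrow> 'a) set) = card (UNIV::'a set) ^ fv.dim (ambient n :: (nat \<Rightarrow> 'a) set)"
    by (rule card_subspace[OF subspace_ambient finite_ambient])
  thus ?thesis using card_ambient[where n=n, where 'a='a] by (metis pow_inj)
qed

lemma ambient_mono: "m \<le> n \<Longrightarrow> ambient m \<subseteq> ambient n"
  by (auto simp: ambient_def)

lemma subspace_plus:
  fixes U V :: "(nat \<Rightarrow> 'a::{field,finite}) set"
  assumes "fv.subspace U" "fv.subspace V"
  shows "fv.subspace (U + V)"
proof -
  have "U + V = {x + y|x y. x \<in> U \<and> y \<in> V}" by (auto simp: set_plus_def)
  thus ?thesis using fv.subspace_sums[OF assms] by simp
qed

lemma plus_ambient:
  assumes "U \<subseteq> ambient n" "V \<subseteq> ambient n" shows "U + V \<subseteq> ambient n"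
proof
  fix w assume "w \<in> U + V"
  then obtain a b where ab: "a \<in> U" "b \<in> V" "w = a + b" by (auto simp: set_plus_def)
  have "a \<in> ambient n" "b \<in> ambient n" using ab assms by auto
  thus "w \<in> ambient n" using ab by (simp add: ambient_def)
qed


lemma finite_plus: "finite U \<Longrightarrow> finite V \<Longrightarrow> finite (U + V)"
proof -
  assume "finite U" "finite V"
  have "U + V \<subseteq> (\<lambda>(a,b). a + b) ` (U \<times> V)"
  proof
    fix w assume "w \<in> U + V"
    then obtain a b where ab: "a \<in> U" "b \<in> V" "w = a + b" by (auto simp: set_plus_def)
    thus "w \<in> (\<lambda>(a,b). a + b) ` (U \<times> V)" by (intro image_eqI[where x="(a,b)"]) auto
  qed
  thus ?thesis using \<open>finite U\<close> \<open>finite V\<close> finite_subset by blast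
qed

lemma card_plus_inter:
  fixes U V :: "(nat \<Rightarrow> 'a::{field,finite}) set"
  assumes U: "fv.subspace U" "finite U" and V: "fv.subspace V" "finite V"
  shows "card (U + V) * card (U \<inter> V) = card U * card V"
proof -
  define F where "F w = {p \<in> U \<times> V. fst p + snd p = w}" for w
  have UV: "U \<times> V = (\<Union>w\<in>U + V. F w)"
    unfolding F_def set_plus_def by auto blast
  have cardF: "card (F w) = card (U \<inter> V)" if w: "w \<in> U + V" for w
  proof -
    obtain u0 v0 where u0: "u0 \<in> U" and v0: "v0 \<in> V" and w0: "w = u0 + v0"
      using w by (auto simp: set_plus_def)
    let ?h = "\<lambda>z. (u0 + z, v0 - z)"
    have "F w = ?h ` (U \<inter> V)"
    proof
      show "F w \<subseteq> ?h ` (U \<inter> V)"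
      proof
        fix p assume p: "p \<in> F w"
        obtain a b where ab: "p = (a, b)" by (cases p)
        have a: "a \<in> U" and b: "b \<in> V" and e: "a + b = u0 + v0" using p ab w0 by (auto simp: F_def)
        have z1: "a - u0 \<in> U" using a u0 U by (simp add: fv.subspace_diff)
        have "a - u0 = v0 - b" using e by (simp add: algebra_simps)
        hence z2: "a - u0 \<in> V" using b v0 V by (simp add: fv.subspace_diff)
        have "p = ?h (a - u0)" using ab \<open>a - u0 = v0 - b\<close> by (simp add: algebra_simps)
        thus "p \<in> ?h ` (U \<inter> V)" using z1 z2 by blast
      qed
    next
      show "?h ` (U \<inter> V) \<subseteq> F w"
        using u0 v0 w0 U V by (auto simp: F_def fv.subspace_add fv.subspace_diff)
    qed
    moreover have "inj_on ?h (U \<inter> V)" by (rule inj_onI) simp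
    ultimately show ?thesis by (simp add: card_image)
  qed
  have fin: "finite (U + V)" using U V finite_plus by blast
  have "card (U \<times> V) = (\<Sum>w\<in>U + V. card (F w))"
    unfolding UV
  proof (rule card_UN_disjoint[OF fin])
    show "\<forall>i\<in>U + V. finite (F i)" using U V by (auto simp: F_def)
    show "\<forall>i\<in>U + V. \<forall>j\<in>U + V. i \<noteq> j \<longrightarrow> F i \<inter> F j = {}" by (auto simp: F_def)
  qed
  also have "\<dots> = card (U + V) * card (U \<inter> V)" using cardF by simp
  finally show ?thesis by (simp add: card_cartesian_product)
qed

lemma modular:
  fixes U V :: "(nat \<Rightarrow> 'a::{field,finite}) set"
  assumes U: "fv.subspace U" "finite U" and V: "fv.subspace V" "finite V"
  shows "fv.dim (U + V) + fv.dim (U \<inter> V) = fv.dim U + fv.dim V"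
proof -
  have s1: "fv.subspace (U + V)" "finite (U + V)" using subspace_plus finite_plus U V by blast+
  have s2: "fv.subspace (U \<inter> V)" "finite (U \<inter> V)" using U V fv.subspace_inter by blast+
  have "card (UNIV::'a set) ^ (fv.dim (U + V) + fv.dim (U \<inter> V)) = card (UNIV::'a set) ^ (fv.dim U + fv.dim V)"
    using card_plus_inter[OF U V] card_subspace[OF s1] card_subspace[OF s2] card_subspace[OF U] card_subspace[OF V]
    by (simp add: power_add)
  thus ?thesis by (rule pow_inj)
qed

lemma exists_between:
  fixes X Y :: "(nat \<Rightarrow> 'a::{field,finite}) set"
  assumes X: "fv.subspace X" and Y: "fv.subspace Y" "finite Y" and XY: "X \<subseteq> Y"
    and k: "fv.dim X \<le> k" "k \<le> fv.dim Y"
  obtains Z where "fv.subspace Z" "X \<subseteq> Z" "Z \<subseteq> Y" "fv.dim Z = k"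
proof -
  have Xf: "finite X" using Y XY finite_subset by blast
  obtain BX where BX: "BX \<subseteq> X" "fv.independent BX" "fv.span BX = X" "card BX = fv.dim X" "finite BX"
    using subspace_basis[OF X Xf] by blast
  obtain BY where BY: "BX \<subseteq> BY" "BY \<subseteq> Y" "fv.independent BY" "Y \<subseteq> fv.span BY"
    using fv.maximal_independent_subset_extend[of BX Y] BX XY by blast
  have fBY: "finite BY" using BY Y finite_subset by blast
  have "fv.span BY = Y" using BY Y by (meson fv.span_minimal subset_antisym)
  hence cBY: "card BY = fv.dim Y" using fv.dim_span_eq_card_independent[OF BY(3)] by simp
  have "k - card BX \<le> card (BY - BX)" using cBY BX k fBY BY(1) by (simp add: card_Diff_subset)
  then obtain T where T: "T \<subseteq> BY - BX" "card T = k - card BX"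
    using obtain_subset_with_card_n by metis
  let ?S = "BX \<union> T"
  have fT: "finite T" using T fBY finite_subset by blast
  have cS: "card ?S = k" using T BX k fT by (subst card_Un_disjoint) auto
  have iS: "fv.independent ?S" using fv.independent_mono[OF BY(3)] T BY by blast
  show ?thesis
  proof (rule that[of "fv.span ?S"])
    show "fv.subspace (fv.span ?S)" by simp
    show "X \<subseteq> fv.span ?S" using BX fv.span_mono[of BX ?S] by auto
    show "fv.span ?S \<subseteq> Y" using BY T Y by (intro fv.span_minimal) auto
    show "fv.dim (fv.span ?S) = k" using fv.dim_span_eq_card_independent[OF iS] cS by simp
  qed
qed


definition LL :: "nat \<Rightarrow> (nat \<Rightarrow> 'a::{field,finite}) set \<Rightarrow> (nat \<Rightarrow> 'a) list set" where
  "LL k X = {xs. length xs = k \<and> distinct xs \<and> set xs \<subseteq> X \<and> fv.independent (set xs)}"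

lemma LL_Suc:
  "LL (Suc k) X = (\<lambda>(xs, x). xs @ [x]) ` (SIGMA xs:LL k X. X - fv.span (set xs))"
proof
  show "LL (Suc k) X \<subseteq> (\<lambda>(xs, x). xs @ [x]) ` (SIGMA xs:LL k X. X - fv.span (set xs))"
  proof
    fix ys assume ys: "ys \<in> LL (Suc k) X"
    hence ne: "ys \<noteq> []" by (auto simp: LL_def)
    let ?xs = "butlast ys" and ?x = "last ys"
    have e: "ys = ?xs @ [?x]" using ne by simp
    have d: "distinct (?xs @ [?x])" and sX: "set (?xs @ [?x]) \<subseteq> X"
      and ind: "fv.independent (set (?xs @ [?x]))" and l: "length ys = Suc k"
      using ys e by (auto simp: LL_def)
    have nin: "?x \<notin> set ?xs" using d by simp
    have "fv.independent (insert ?x (set ?xs))" using ind by simp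
    hence i2: "fv.independent (set ?xs)" "?x \<notin> fv.span (set ?xs)"
      using nin by (auto simp: fv.independent_insert)
    have "?xs \<in> LL k X" using d sX i2 l by (auto simp: LL_def)
    moreover have "?x \<in> X - fv.span (set ?xs)" using sX i2 by auto
    ultimately show "ys \<in> (\<lambda>(xs, x). xs @ [x]) ` (SIGMA xs:LL k X. X - fv.span (set xs))"
      using e by force
  qed
next
  show "(\<lambda>(xs, x). xs @ [x]) ` (SIGMA xs:LL k X. X - fv.span (set xs)) \<subseteq> LL (Suc k) X"
  proof clarify
    fix xs x assume xs: "xs \<in> LL k X" and x: "x \<in> X" "x \<notin> fv.span (set xs)"
    have "x \<notin> set xs" using x fv.span_superset by blast
    thus "xs @ [x] \<in> LL (Suc k) X" using xs x by (auto simp: LL_def fv.independent_insert)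
  qed
qed

lemma card_LL:
  fixes X :: "(nat \<Rightarrow> 'a::{field,finite}) set"
  assumes X: "fv.subspace X" "finite X"
  shows "finite (LL k X) \<and> card (LL k X) = (\<Prod>i<k. card X - card (UNIV::'a set) ^ i)"
proof (induction k)
  case 0
  have "LL 0 X = {[]}" by (auto simp: LL_def fv.independent_empty)
  then show ?case by simp
next
  case (Suc k)
  have inj: "inj_on (\<lambda>(xs, x). xs @ [x]) (SIGMA xs:LL k X. X - fv.span (set xs))"
    by (rule inj_onI) auto
  have cs: "card (X - fv.span (set xs)) = card X - card (UNIV::'a set) ^ k" if "xs \<in> LL k X" for xs
  proof -
    have xs: "length xs = k" "distinct xs" "set xs \<subseteq> X" "fv.independent (set xs)"
      using that by (auto simp: LL_def)
    have "fv.span (set xs) \<subseteq> X" using xs X fv.span_minimal by blast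
    moreover have "card (fv.span (set xs)) = card (UNIV::'a set) ^ k"
      using card_span_indep[of "set xs"] xs by (simp add: distinct_card)
    ultimately show ?thesis using X by (simp add: card_Diff_subset finite_subset)
  qed
  have fin: "finite (SIGMA xs:LL k X. X - fv.span (set xs))" using Suc X by auto
  have "card (LL (Suc k) X) = card (SIGMA xs:LL k X. X - fv.span (set xs))"
    unfolding LL_Suc using card_image[OF inj] by simp
  also have "\<dots> = (\<Sum>xs\<in>LL k X. card (X - fv.span (set xs)))"
    using Suc X by (simp add: card_SigmaI)
  also have "\<dots> = card (LL k X) * (card X - card (UNIV::'a set) ^ k)" using cs by simp
  finally show ?case using Suc fin unfolding LL_Suc by (simp add: mult.commute)
qed

lemma finite_Er: "finite (Er m r :: (nat \<Rightarrow> 'a::{field,finite}) set set)"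
proof -
  have "Er m r \<subseteq> Pow (ambient m :: (nat \<Rightarrow> 'a) set)" by (auto simp: Er_def)
  thus ?thesis using finite_ambient finite_subset by blast
qed

lemma Er_facts:
  fixes U :: "(nat \<Rightarrow> 'a::{field,finite}) set"
  assumes "U \<in> Er m r"
  shows "fv.subspace U" "finite U" "U \<subseteq> ambient m" "fv.dim U = r"
    "card U = card (UNIV::'a::{field,finite} set) ^ r"
proof -
  show s: "fv.subspace U" "U \<subseteq> ambient m" "fv.dim U = r" using assms by (auto simp: Er_def)
  show f: "finite U" using s finite_ambient finite_subset by blast
  show "card U = card (UNIV::'a::{field,finite} set) ^ r" using card_subspace[OF s(1) f] s by simp
qed

lemma card_Er_mult:
  shows "card (Er m r :: (nat \<Rightarrow> 'a::{field,finite}) set set) * (\<Prod>i<r. card (UNIV::'a set) ^ r - card (UNIV::'a set) ^ i)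
     \<le> (\<Prod>i<r. card (UNIV::'a set) ^ m - card (UNIV::'a set) ^ i)"
proof -
  let ?E = "Er m r :: (nat \<Rightarrow> 'a) set set"
  have sp: "fv.span (set xs) = U" if U: "U \<in> ?E" and xs: "xs \<in> LL r U" for U xs
  proof -
    note F = Er_facts[OF U]
    have xs': "length xs = r" "distinct xs" "set xs \<subseteq> U" "fv.independent (set xs)"
      using xs by (auto simp: LL_def)
    have sub: "fv.span (set xs) \<subseteq> U" using xs' F fv.span_minimal by blast
    have "card (fv.span (set xs)) = card U"
      using card_span_indep[of "set xs"] xs' F by (simp add: distinct_card)
    thus ?thesis using sub F card_subset_eq by blast
  qed
  have "card (\<Union>U\<in>?E. LL r U) = (\<Sum>U\<in>?E. card (LL r U))"
  proof (rule card_UN_disjoint[OF finite_Er])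
    show "\<forall>U\<in>?E. finite (LL r U)" using card_LL Er_facts by blast
    show "\<forall>U\<in>?E. \<forall>V\<in>?E. U \<noteq> V \<longrightarrow> LL r U \<inter> LL r V = {}" using sp by blast
  qed
  also have "\<dots> = (\<Sum>U\<in>?E. (\<Prod>i<r. card (UNIV::'a set) ^ r - card (UNIV::'a set) ^ i))"
  proof (rule sum.cong[OF refl])
    fix U assume U: "U \<in> ?E"
    show "card (LL r U) = (\<Prod>i<r. card (UNIV::'a set) ^ r - card (UNIV::'a set) ^ i)"
      using card_LL[OF Er_facts(1,2)[OF U]] Er_facts(5)[OF U] by simp
  qed
  also have "\<dots> = card ?E * (\<Prod>i<r. card (UNIV::'a set) ^ r - card (UNIV::'a set) ^ i)"
    by simp
  finally have e: "card (\<Union>U\<in>?E. LL r U) = card ?E * (\<Prod>i<r. card (UNIV::'a set) ^ r - card (UNIV::'a set) ^ i)" .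
  have "(\<Union>U\<in>?E. LL r U) \<subseteq> LL r (ambient m)" using Er_facts(3) unfolding LL_def by blast
  hence "card (\<Union>U\<in>?E. LL r U) \<le> card (LL r (ambient m :: (nat \<Rightarrow> 'a) set))"
    using card_LL[OF subspace_ambient finite_ambient] by (meson card_mono)
  moreover have "card (LL r (ambient m :: (nat \<Rightarrow> 'a) set)) = (\<Prod>i<r. card (UNIV::'a set) ^ m - card (UNIV::'a set) ^ i)"
    using card_LL[where X="ambient m :: (nat \<Rightarrow> 'a) set" and k=r, OF subspace_ambient finite_ambient] card_ambient[where 'a='a, of m] by simp
  ultimately show ?thesis using e by simp
qed


lemma card_Er_gauss:
  assumes "r \<le> m"
  shows "real (card (Er m r :: (nat \<Rightarrow> 'a::{field,finite}) set set)) \<le> gauss_binom (card (UNIV::'a set)) m r"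
proof -
  let ?q = "card (UNIV::'a set)"
  have q2: "2 \<le> ?q" by (rule q_ge2)
  have lt: "?q ^ i < ?q ^ k" if "i < k" for i k using q2 that by (simp add: power_strict_increasing)
  have R1: "real (\<Prod>i<r. ?q ^ r - ?q ^ i) = (\<Prod>i<r. real ?q ^ r - real ?q ^ i)"
    using lt by (simp add: of_nat_diff less_imp_le)
  have R2: "real (\<Prod>i<r. ?q ^ m - ?q ^ i) = (\<Prod>i<r. real ?q ^ m - real ?q ^ i)"
    using lt assms by (simp add: of_nat_diff less_imp_le)
  have pos: "0 < (\<Prod>i<r. real ?q ^ r - real ?q ^ i)"
  proof (rule prod_pos)
    fix i assume "i \<in> {..<r}"
    hence "?q ^ i < ?q ^ r" using lt by simp
    hence "real (?q ^ i) < real (?q ^ r)" by linarith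
    thus "0 < real ?q ^ r - real ?q ^ i" by simp
  qed
  have "real (card (Er m r :: (nat \<Rightarrow> 'a) set set)) * (\<Prod>i<r. real ?q ^ r - real ?q ^ i) \<le> (\<Prod>i<r. real ?q ^ m - real ?q ^ i)"
    using card_Er_mult[where 'a='a, of m r] R1 R2 by (metis of_nat_le_iff of_nat_mult)
  hence "real (card (Er m r :: (nat \<Rightarrow> 'a) set set)) \<le> (\<Prod>i<r. real ?q ^ m - real ?q ^ i) / (\<Prod>i<r. real ?q ^ r - real ?q ^ i)"
    using pos by (simp add: pos_le_divide_eq)
  thus ?thesis unfolding gauss_binom_def by (simp add: prod_dividef)
qed


lemma Er_I: "fv.subspace U \<Longrightarrow> U \<subseteq> ambient n \<Longrightarrow> fv.dim U = r \<Longrightarrow> U \<in> Er n r"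
  by (simp add: Er_def)

lemma ambient_in_Er: "r \<le> n \<Longrightarrow> (ambient r :: (nat \<Rightarrow> 'a::{field,finite}) set) \<in> Er n r"
  using subspace_ambient ambient_mono dim_ambient by (metis Er_I)

lemma Er_mono: "m \<le> n \<Longrightarrow> Er m r \<subseteq> Er n r"
  using ambient_mono by (auto simp: Er_def)

lemma dI_Er:
  fixes U V :: "(nat \<Rightarrow> 'a::{field,finite}) set"
  assumes "U \<in> Er n r" "V \<in> Er n r"
  shows "dI U V = r - fv.dim (U \<inter> V)"
proof -
  note FU = Er_facts[OF assms(1)] and FV = Er_facts[OF assms(2)]
  have "fv.dim (U + V) + fv.dim (U \<inter> V) = r + r" using modular[OF FU(1,2) FV(1,2)] FU FV by simp
  thus ?thesis unfolding dI_def using FU FV by simp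
qed

lemma dim_int_le:
  fixes U V :: "(nat \<Rightarrow> 'a::{field,finite}) set"
  assumes "U \<in> Er n r" "fv.subspace V"
  shows "fv.dim (U \<inter> V) \<le> r"
  using Er_facts[OF assms(1)] dim_mono_fin[of "U \<inter> V" U] fv.subspace_inter[OF _ assms(2)] by auto

lemma zero_sub: "fv.subspace (fv.span {} :: (nat \<Rightarrow> 'a::{field,finite}) set)"
  by (rule fv.subspace_span)

lemma zero_dim: "fv.dim (fv.span {} :: (nat \<Rightarrow> 'a::{field,finite}) set) = 0"
  by (metis card.empty fv.dim_span_eq_card_independent fv.independent_empty)

lemma zero_in: "fv.subspace U \<Longrightarrow> fv.span {} \<subseteq> U"
  using fv.span_minimal[of "{}" U] by blast

lemma KC_le:
  fixes C :: "(nat \<Rightarrow> 'a::{field,finite}) set set"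
  assumes "r \<le> n" "C \<subseteq> Er n r" "C \<noteq> {}" "\<And>U. U \<in> Er n r \<Longrightarrow> \<exists>D\<in>C. dI U D \<le> \<rho>"
  shows "KC TYPE('a) n r \<rho> \<le> card C"
proof -
  have fC: "finite C" using assms finite_Er finite_subset by blast
  have ne: "Er n r \<noteq> ({} :: (nat \<Rightarrow> 'a) set set)" using ambient_in_Er[OF assms(1)] by blast
  have "cov_radius n r C \<le> \<rho>"
    unfolding cov_radius_def
  proof (subst Max_le_iff)
    show "finite ((\<lambda>U. Min ((\<lambda>D. dI U D) ` C)) ` Er n r)" by (rule finite_imageI[OF finite_Er])
    show "(\<lambda>U. Min ((\<lambda>D. dI U D) ` C)) ` Er n r \<noteq> {}" using ne by simp
    show "\<forall>a\<in>(\<lambda>U. Min ((\<lambda>D. dI U D) ` C)) ` Er n r. a \<le> \<rho>"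
    proof
      fix a assume "a \<in> (\<lambda>U. Min ((\<lambda>D. dI U D) ` C)) ` Er n r"
      then obtain U where U: "U \<in> Er n r" and a: "a = Min ((\<lambda>D. dI U D) ` C)" by blast
      obtain D where D: "D \<in> C" "dI U D \<le> \<rho>" using assms(4)[OF U] by blast
      have "a \<le> dI U D" unfolding a using fC D by (intro Min_le) auto
      thus "a \<le> \<rho>" using D by simp
    qed
  qed
  thus ?thesis unfolding KC_def using assms by (intro Least_le) blast
qed

lemma KC_obtain:
  fixes C0 :: "(nat \<Rightarrow> 'a::{field,finite}) set set"
  assumes "C0 \<subseteq> Er n r" "C0 \<noteq> {}" "cov_radius n r C0 \<le> \<rho>"
  obtains C :: "(nat \<Rightarrow> 'a) set set" where "C \<subseteq> Er n r" "C \<noteq> {}" "card C = KC TYPE('a) n r \<rho>"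
    "\<And>U. U \<in> Er n r \<Longrightarrow> \<exists>D\<in>C. dI U D \<le> \<rho>"
proof -
  have "\<exists>C::(nat \<Rightarrow> 'a) set set. C \<subseteq> Er n r \<and> C \<noteq> {} \<and> card C = KC TYPE('a) n r \<rho> \<and> cov_radius n r C \<le> \<rho>"
    unfolding KC_def by (rule LeastI_ex) (use assms in blast)
  then obtain C :: "(nat \<Rightarrow> 'a) set set" where C: "C \<subseteq> Er n r" "C \<noteq> {}" "card C = KC TYPE('a) n r \<rho>" "cov_radius n r C \<le> \<rho>"
    by blast
  have fC: "finite C" using C finite_Er finite_subset by blast
  show ?thesis
  proof (rule that[OF C(1-3)])
    fix U :: "(nat \<Rightarrow> 'a) set" assume U: "U \<in> Er n r"
    have "Min ((\<lambda>D. dI U D) ` C) \<le> cov_radius n r C"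
      unfolding cov_radius_def using U finite_Er by (intro Max_ge) auto
    moreover have "Min ((\<lambda>D. dI U D) ` C) \<in> (\<lambda>D. dI U D) ` C" using fC C by (intro Min_in) auto
    moreover obtain D where "D \<in> C" "Min ((\<lambda>D. dI U D) ` C) = dI U D"
      using calculation(2) by blast
    ultimately show "\<exists>D\<in>C. dI U D \<le> \<rho>" using C(4) by (metis le_trans)
  qed
qed

lemma cov_le:
  fixes C :: "(nat \<Rightarrow> 'a::{field,finite}) set set"
  assumes "r \<le> n" "C \<subseteq> Er n r" "C \<noteq> {}" "\<And>U. U \<in> Er n r \<Longrightarrow> \<exists>D\<in>C. dI U D \<le> \<rho>"
  shows "cov_radius n r C \<le> \<rho>"
proof -
  have fC: "finite C" using assms finite_Er finite_subset by blast
  have ne: "Er n r \<noteq> ({} :: (nat \<Rightarrow> 'a) set set)" using ambient_in_Er[OF assms(1)] by blast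
  show ?thesis
    unfolding cov_radius_def
  proof (subst Max_le_iff)
    show "finite ((\<lambda>U. Min ((\<lambda>D. dI U D) ` C)) ` Er n r)" by (rule finite_imageI[OF finite_Er])
    show "(\<lambda>U. Min ((\<lambda>D. dI U D) ` C)) ` Er n r \<noteq> {}" using ne by simp
    show "\<forall>a\<in>(\<lambda>U. Min ((\<lambda>D. dI U D) ` C)) ` Er n r. a \<le> \<rho>"
    proof
      fix a assume "a \<in> (\<lambda>U. Min ((\<lambda>D. dI U D) ` C)) ` Er n r"
      then obtain U where U: "U \<in> Er n r" and a: "a = Min ((\<lambda>D. dI U D) ` C)" by blast
      obtain D where D: "D \<in> C" "dI U D \<le> \<rho>" using assms(4)[OF U] by blast
      have "a \<le> dI U D" unfolding a using fC D by (intro Min_le) auto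
      thus "a \<le> \<rho>" using D by simp
    qed
  qed
qed


lemma claim2_cover:
  fixes U :: "(nat \<Rightarrow> 'a::{field,finite}) set"
  assumes "r \<le> n div 2" "0 < \<rho>" "\<rho> < r" "U \<in> Er (n - 1) r"
  shows "\<exists>D\<in>Er (n - \<rho>) r. dI U D \<le> \<rho> - 1"
proof -
  let ?S = "ambient (n - \<rho>) :: (nat \<Rightarrow> 'a) set"
  note FU = Er_facts[OF assms(4)]
  have Sf: "fv.subspace ?S" "finite ?S" using subspace_ambient finite_ambient by blast+
  have m: "fv.dim (U + ?S) + fv.dim (U \<inter> ?S) = r + (n - \<rho>)"
    using modular[OF FU(1,2) Sf] FU dim_ambient[where 'a='a] by simp
  have "fv.dim (U + ?S) \<le> n - 1"
    using dim_mono_fin[OF subspace_plus[OF FU(1) Sf(1)] subspace_ambient finite_ambient plus_ambient[OF FU(3)]]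
      ambient_mono[of "n - \<rho>" "n - 1"] assms dim_ambient[where 'a='a] by (metis diff_le_mono2 Suc_leI le_trans One_nat_def)
  hence lo: "r + 1 - \<rho> \<le> fv.dim (U \<inter> ?S)" using m assms by linarith
  have XS: "fv.subspace (U \<inter> ?S)" using FU Sf fv.subspace_inter by blast
  have "fv.dim (U \<inter> ?S) \<le> r" using dim_int_le[OF assms(4) Sf(1)] .
  moreover have "r \<le> fv.dim ?S" using dim_ambient[where 'a='a] assms by simp
  ultimately obtain W where W: "fv.subspace W" "U \<inter> ?S \<subseteq> W" "W \<subseteq> ?S" "fv.dim W = r"
    using exists_between[OF XS Sf] by (metis inf_le2 order_refl)
  have WE: "W \<in> Er (n - \<rho>) r" using W by (simp add: Er_I)
  have "n - \<rho> \<le> n - 1" using assms by linarith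
  hence WE': "W \<in> Er (n - 1) r" using Er_mono[of "n - \<rho>" "n - 1"] WE by blast
  have "fv.dim (U \<inter> ?S) \<le> fv.dim (U \<inter> W)"
    using dim_mono_fin[OF XS fv.subspace_inter[OF FU(1) W(1)]] FU W by auto
  hence "dI U W \<le> \<rho> - 1" using dI_Er[OF assms(4) WE'] lo by linarith
  thus ?thesis using WE by blast
qed

lemma claim2:
  assumes "r \<le> n div 2" "0 < \<rho>" "\<rho> < r"
  shows "real (KC TYPE('a::{field,finite}) (n - 1) r (\<rho> - 1)) \<le> gauss_binom (card (UNIV :: 'a set)) (n - \<rho>) r"
    and "(Er (n - \<rho>) r :: (nat \<Rightarrow> 'a) set set) \<subseteq> Er (n - 1) r" "(Er (n - \<rho>) r :: (nat \<Rightarrow> 'a) set set) \<noteq> {}"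
    "cov_radius (n - 1) r (Er (n - \<rho>) r :: (nat \<Rightarrow> 'a) set set) \<le> \<rho> - 1"
proof -
  show sub: "(Er (n - \<rho>) r :: (nat \<Rightarrow> 'a) set set) \<subseteq> Er (n - 1) r" by (rule Er_mono) (use assms in linarith)
  have rnr: "r \<le> n - \<rho>" using assms by linarith
  thus ne: "(Er (n - \<rho>) r :: (nat \<Rightarrow> 'a) set set) \<noteq> {}" using ambient_in_Er[where 'a='a, of r "n - \<rho>"] by auto
  have rn: "r \<le> n - 1" using assms by linarith
  show "cov_radius (n - 1) r (Er (n - \<rho>) r :: (nat \<Rightarrow> 'a) set set) \<le> \<rho> - 1"
    using cov_le[OF rn sub ne] claim2_cover[OF assms] by blast
  have "KC TYPE('a) (n - 1) r (\<rho> - 1) \<le> card (Er (n - \<rho>) r :: (nat \<Rightarrow> 'a) set set)"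
    using KC_le[OF rn sub ne] claim2_cover[OF assms] by blast
  moreover have "real (card (Er (n - \<rho>) r :: (nat \<Rightarrow> 'a) set set)) \<le> gauss_binom (card (UNIV :: 'a set)) (n - \<rho>) r"
    using card_Er_gauss[where 'a='a, OF rnr] .
  ultimately show "real (KC TYPE('a::{field,finite}) (n - 1) r (\<rho> - 1)) \<le> gauss_binom (card (UNIV :: 'a set)) (n - \<rho>) r"
    by (meson of_nat_le_iff order_trans)
qed


lemma exists_sub_dim:
  fixes U :: "(nat \<Rightarrow> 'a::{field,finite}) set"
  assumes "U \<in> Er n r" "k \<le> r"
  obtains W where "W \<in> Er n k" "W \<subseteq> U"
proof -
  note FU = Er_facts[OF assms(1)]
  obtain W where "fv.subspace W" "fv.span {} \<subseteq> W" "W \<subseteq> U" "fv.dim W = k"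
    using exists_between[OF zero_sub FU(1,2) zero_in[OF FU(1)]] zero_dim[where 'a='a] FU assms by auto
  thus ?thesis using that FU by (meson Er_I order_trans)
qed

lemma exists_super_dim:
  fixes U :: "(nat \<Rightarrow> 'a::{field,finite}) set"
  assumes "U \<in> Er n r" "r \<le> k" "k \<le> n"
  obtains W where "W \<in> Er n k" "U \<subseteq> W"
proof -
  note FU = Er_facts[OF assms(1)]
  obtain W where "fv.subspace W" "U \<subseteq> W" "W \<subseteq> ambient n" "fv.dim W = k"
    using exists_between[OF FU(1) subspace_ambient finite_ambient FU(3)] dim_ambient[where 'a='a] FU assms by auto
  thus ?thesis using that by (meson Er_I)
qed

lemma claim4:
  assumes "r \<le> n div 2" "0 < \<rho>" "\<rho> < r"
  obtains C :: "(nat \<Rightarrow> 'a::{field,finite}) set set" where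
    "C \<subseteq> Er n (r - 1)" "C \<noteq> {}" "real (card C) \<le> gauss_binom (card (UNIV :: 'a set)) n (r - \<rho>)"
    "\<And>U. U \<in> Er n (r - 1) \<Longrightarrow> \<exists>D\<in>C. dI U D \<le> \<rho> - 1"
proof -
  have h1: "r - \<rho> \<le> r - 1" and h2: "r - 1 \<le> n" using assms by linarith+
  define f :: "(nat \<Rightarrow> 'a) set \<Rightarrow> (nat \<Rightarrow> 'a) set" where "f A = (SOME W. W \<in> Er n (r - 1) \<and> A \<subseteq> W)" for A
  have fA: "f A \<in> Er n (r - 1) \<and> A \<subseteq> f A" if A0: "A \<in> Er n (r - \<rho>)" for A
  proof -
    obtain W where "W \<in> Er n (r - 1)" "A \<subseteq> W"
      using exists_super_dim[OF A0, of "r - 1"] h1 h2 by blast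
    thus ?thesis unfolding f_def using someI[where P="\<lambda>W. W \<in> Er n (r - 1) \<and> A \<subseteq> W" and x=W] by blast
  qed
  let ?C = "f ` Er n (r - \<rho>)"
  show ?thesis
  proof (rule that[of ?C])
    show "?C \<subseteq> Er n (r - 1)" using fA by blast
    have "r - \<rho> \<le> n" using assms by linarith
    thus "?C \<noteq> {}" using ambient_in_Er[where 'a='a, of "r - \<rho>" n] by blast
    have "card ?C \<le> card (Er n (r - \<rho>) :: (nat \<Rightarrow> 'a) set set)" using finite_Er by (rule card_image_le)
    moreover have "real (card (Er n (r - \<rho>) :: (nat \<Rightarrow> 'a) set set)) \<le> gauss_binom (card (UNIV :: 'a set)) n (r - \<rho>)"
      using card_Er_gauss[where 'a='a] h2 h1 by simp
    ultimately show "real (card ?C) \<le> gauss_binom (card (UNIV :: 'a set)) n (r - \<rho>)"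
      by (meson of_nat_le_iff order_trans)
  next
    fix U :: "(nat \<Rightarrow> 'a) set" assume U: "U \<in> Er n (r - 1)"
    obtain A :: "(nat \<Rightarrow> 'a) set" where A: "A \<in> Er n (r - \<rho>)" "A \<subseteq> U" using exists_sub_dim[OF U h1] by blast
    have D: "f A \<in> Er n (r - 1)" "A \<subseteq> f A" using fA[OF A(1)] by auto
    have "fv.dim A \<le> fv.dim (U \<inter> f A)"
      using dim_mono_fin[OF Er_facts(1)[OF A(1)] fv.subspace_inter[OF Er_facts(1)[OF U] Er_facts(1)[OF D(1)]]]
        Er_facts[OF U] A D by auto
    hence "dI U (f A) \<le> \<rho> - 1" using dI_Er[OF U D(1)] Er_facts(4)[OF A(1)] by linarith
    thus "\<exists>D\<in>?C. dI U D \<le> \<rho> - 1" using A(1) by blast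
  qed
qed


lemma claim1:
  assumes "r \<le> n div 2" "0 < \<rho>" "\<rho> < r"
  shows "KC TYPE('a::{field,finite}) n r \<rho> \<le> KC TYPE('a) (n - 1) r (\<rho> - 1)"
proof -
  obtain C :: "(nat \<Rightarrow> 'a) set set" where C: "C \<subseteq> Er (n - 1) r" "C \<noteq> {}" "card C = KC TYPE('a) (n - 1) r (\<rho> - 1)"
    "\<And>U. U \<in> Er (n - 1) r \<Longrightarrow> \<exists>D\<in>C. dI U D \<le> \<rho> - 1"
    using KC_obtain[OF claim2(2-4)[OF assms, where 'a='a]] by metis
  have rn: "r \<le> n" using assms by linarith
  have CE: "C \<subseteq> Er n r" using C Er_mono[of "n - 1" n r] by auto
  have "KC TYPE('a) n r \<rho> \<le> card C"
  proof (rule KC_le[OF rn CE C(2)])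
    fix U :: "(nat \<Rightarrow> 'a) set" assume U: "U \<in> Er n r"
    let ?S = "ambient (n - 1) :: (nat \<Rightarrow> 'a) set"
    note FU = Er_facts[OF U]
    have Sf: "fv.subspace ?S" "finite ?S" using subspace_ambient finite_ambient by blast+
    have m: "fv.dim (U + ?S) + fv.dim (U \<inter> ?S) = r + (n - 1)"
      using modular[OF FU(1,2) Sf] FU dim_ambient[where 'a='a] by simp
    have "fv.dim (U + ?S) \<le> n"
      using dim_mono_fin[OF subspace_plus[OF FU(1) Sf(1)] subspace_ambient finite_ambient plus_ambient[OF FU(3)]]
        ambient_mono[of "n - 1" n] dim_ambient[where 'a='a] by (metis diff_le_self)
    hence lo: "r - 1 \<le> fv.dim (U \<inter> ?S)" using m assms by linarith
    have XS: "fv.subspace (U \<inter> ?S)" using FU Sf fv.subspace_inter by blast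
    have "fv.dim (U \<inter> ?S) \<le> r" using dim_int_le[OF U Sf(1)] .
    moreover have "r \<le> fv.dim ?S" using dim_ambient[where 'a='a] assms by simp
    ultimately obtain W where W: "fv.subspace W" "U \<inter> ?S \<subseteq> W" "W \<subseteq> ?S" "fv.dim W = r"
      using exists_between[OF XS Sf] by (metis inf_le2 order_refl)
    have WE: "W \<in> Er (n - 1) r" using W by (simp add: Er_I)
    have WE': "W \<in> Er n r" using Er_mono[of "n - 1" n] WE by auto
    have "fv.dim (U \<inter> ?S) \<le> fv.dim (U \<inter> W)"
      using dim_mono_fin[OF XS fv.subspace_inter[OF FU(1) W(1)]] FU W by auto
    hence UW: "r - 1 \<le> fv.dim (U \<inter> W)" using lo by linarith
    obtain D where D: "D \<in> C" "dI W D \<le> \<rho> - 1" using C(4)[OF WE] by blast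
    have DE: "D \<in> Er (n - 1) r" "D \<in> Er n r" using D C CE by auto
    have WD: "r + 1 - \<rho> \<le> fv.dim (W \<inter> D)"
      using dI_Er[OF WE DE(1)] D dim_int_le[OF WE Er_facts(1)[OF DE(1)]] assms by linarith
    note FW = Er_facts[OF WE] and FD = Er_facts[OF DE(1)]
    have s1: "fv.subspace (U \<inter> W)" "finite (U \<inter> W)" using FU FW fv.subspace_inter by auto
    have s2: "fv.subspace (W \<inter> D)" "finite (W \<inter> D)" using FD FW fv.subspace_inter by auto
    have m2: "fv.dim ((U \<inter> W) + (W \<inter> D)) + fv.dim ((U \<inter> W) \<inter> (W \<inter> D)) = fv.dim (U \<inter> W) + fv.dim (W \<inter> D)"
      using modular[OF s1 s2] .
    have "(U \<inter> W) + (W \<inter> D) \<subseteq> W" using FW(1) by (auto simp: set_plus_def fv.subspace_add)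
    hence "fv.dim ((U \<inter> W) + (W \<inter> D)) \<le> r"
      using dim_mono_fin[OF subspace_plus[OF s1(1) s2(1)] FW(1,2)] FW by simp
    hence "r - \<rho> \<le> fv.dim ((U \<inter> W) \<inter> (W \<inter> D))" using m2 UW WD assms by linarith
    moreover have "fv.dim ((U \<inter> W) \<inter> (W \<inter> D)) \<le> fv.dim (U \<inter> D)"
      using dim_mono_fin[OF fv.subspace_inter[OF s1(1) s2(1)] fv.subspace_inter[OF FU(1) FD(1)]] FU by auto
    ultimately have "dI U D \<le> \<rho>" using dI_Er[OF U DE(2)] by linarith
    thus "\<exists>D\<in>C. dI U D \<le> \<rho>" using D by blast
  qed
  thus ?thesis using C by simp
qed

lemma claim3:
  assumes "r \<le> n div 2" "0 < \<rho>" "\<rho> < r"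
  shows "KC TYPE('a::{field,finite}) n r \<rho> \<le> KC TYPE('a) n (r - 1) (\<rho> - 1)"
proof -
  have rn: "r \<le> n" "r - 1 \<le> n" using assms by linarith+
  obtain C4 :: "(nat \<Rightarrow> 'a) set set" where C4: "C4 \<subseteq> Er n (r - 1)" "C4 \<noteq> {}"
    "\<And>U. U \<in> Er n (r - 1) \<Longrightarrow> \<exists>D\<in>C4. dI U D \<le> \<rho> - 1"
    using claim4[OF assms] by metis
  obtain C :: "(nat \<Rightarrow> 'a) set set" where C: "C \<subseteq> Er n (r - 1)" "C \<noteq> {}" "card C = KC TYPE('a) n (r - 1) (\<rho> - 1)"
    "\<And>U. U \<in> Er n (r - 1) \<Longrightarrow> \<exists>D\<in>C. dI U D \<le> \<rho> - 1"
    using KC_obtain[OF C4(1,2) cov_le[OF rn(2) C4(1,2) C4(3)]] by metis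
  define g :: "(nat \<Rightarrow> 'a) set \<Rightarrow> (nat \<Rightarrow> 'a) set" where "g A = (SOME W. W \<in> Er n r \<and> A \<subseteq> W)" for A
  have gA: "g A \<in> Er n r \<and> A \<subseteq> g A" if A0: "A \<in> Er n (r - 1)" for A
  proof -
    obtain W where "W \<in> Er n r" "A \<subseteq> W"
      using exists_super_dim[OF A0 diff_le_self rn(1)] by blast
    thus ?thesis unfolding g_def using someI[where P="\<lambda>W. W \<in> Er n r \<and> A \<subseteq> W" and x=W] by blast
  qed
  have fC: "finite C" using C finite_Er finite_subset by blast
  have "KC TYPE('a) n r \<rho> \<le> card (g ` C)"
  proof (rule KC_le[OF rn(1)])
    show "g ` C \<subseteq> Er n r" using gA C by blast
    show "g ` C \<noteq> {}" using C by blast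
    fix U :: "(nat \<Rightarrow> 'a) set" assume U: "U \<in> Er n r"
    obtain W where W: "W \<in> Er n (r - 1)" "W \<subseteq> U" using exists_sub_dim[OF U, of "r - 1"] by auto
    obtain D where D: "D \<in> C" "dI W D \<le> \<rho> - 1" using C(4)[OF W(1)] by blast
    have DE: "D \<in> Er n (r - 1)" using D C by auto
    have WD: "r - \<rho> \<le> fv.dim (W \<inter> D)"
      using dI_Er[OF W(1) DE] D dim_int_le[OF W(1) Er_facts(1)[OF DE]] assms by linarith
    have G: "g D \<in> Er n r" "D \<subseteq> g D" using gA[OF DE] by auto
    have "fv.dim (W \<inter> D) \<le> fv.dim (U \<inter> g D)"
      using dim_mono_fin[OF fv.subspace_inter[OF Er_facts(1)[OF W(1)] Er_facts(1)[OF DE]]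
          fv.subspace_inter[OF Er_facts(1)[OF U] Er_facts(1)[OF G(1)]]] Er_facts[OF U] W G by auto
    hence "dI U (g D) \<le> \<rho>" using dI_Er[OF U G(1)] WD by linarith
    thus "\<exists>D\<in>g ` C. dI U D \<le> \<rho>" using D by blast
  qed
  also have "\<dots> \<le> card C" using fC by (rule card_image_le)
  finally show ?thesis using C by simp
qed

theorem lemma8:
  fixes n r \<rho> :: nat
  assumes "r \<le> n div 2" and "0 < \<rho>" and "\<rho> < r"
  shows "KC TYPE('a::{field,finite}) n r \<rho> \<le> KC TYPE('a) (n - 1) r (\<rho> - 1)
       \<and> real (KC TYPE('a) (n - 1) r (\<rho> - 1)) \<le> gauss_binom (card (UNIV :: 'a set)) (n - \<rho>) r
       \<and> KC TYPE('a) n r \<rho> \<le> KC TYPE('a) n (r - 1) (\<rho> - 1)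
       \<and> real (KC TYPE('a) n (r - 1) (\<rho> - 1)) \<le> gauss_binom (card (UNIV :: 'a set)) n (r - \<rho>)"
proof (intro conjI)
  show "KC TYPE('a::{field,finite}) n r \<rho> \<le> KC TYPE('a) (n - 1) r (\<rho> - 1)" by (rule claim1[OF assms])
  show "real (KC TYPE('a) (n - 1) r (\<rho> - 1)) \<le> gauss_binom (card (UNIV :: 'a set)) (n - \<rho>) r" by (rule claim2(1)[OF assms])
  show "KC TYPE('a) n r \<rho> \<le> KC TYPE('a) n (r - 1) (\<rho> - 1)" by (rule claim3[OF assms])
  obtain C4 :: "(nat \<Rightarrow> 'a) set set" where C4: "C4 \<subseteq> Er n (r - 1)" "C4 \<noteq> {}"
    "real (card C4) \<le> gauss_binom (card (UNIV :: 'a set)) n (r - \<rho>)"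
    "\<And>U. U \<in> Er n (r - 1) \<Longrightarrow> \<exists>D\<in>C4. dI U D \<le> \<rho> - 1"
    using claim4[OF assms] by metis
  have "r - 1 \<le> n" using assms by linarith
  hence "KC TYPE('a) n (r - 1) (\<rho> - 1) \<le> card C4" using KC_le C4 by blast
  thus "real (KC TYPE('a) n (r - 1) (\<rho> - 1)) \<le> gauss_binom (card (UNIV :: 'a set)) n (r - \<rho>)"
    using C4(3) by (meson of_nat_le_iff order_trans)
qed

end
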